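(* Let $n\ge2$ and let $r_1,\dots,r_{N(n)}$ be the inflection points of the Hilbert curve $H_n$ (or of any image of $H_n$ under an invertible affine map). Then $\bar\kappa_k=0$ for all $2\le k\le N(n)-2$, and the sequence of first affine curvatures $(\kappa_2,\kappa_3,\dots,\kappa_{N(n)-2})$ equals the number sequence obtained by writing $1$, then the word $K_n$ with each letter replaced by its number string, then $1$. For example, for $n=2$ it is $1,-2,1,\tfrac12,-1,1,-1,2,1,-\tfrac12,1$.
   Context: The Hilbert curve at step $n$ is the polygon $H_n$ in the unit square defined recursively: $H_1$ has vertices $(\tfrac14,\tfrac14),(\tfrac14,\tfrac34),(\tfrac34,\tfrac34),(\tfrac34,\tfrac14)$; $H_{n+1}$ is the concatenation (in this order, joined by the connecting edges) of $f_1(H_n),f_2(H_n),f_3(H_n),f_4(H_n)$, where $f_1(x,y)=(\tfrac y2,\tfrac x2)$, $f_2(x,y)=(\tfrac x2,\tfrac y2+\tfrac12)$, $f_3(x,y)=(\tfrac x2+\tfrac12,\tfrac y2+\tfrac12)$, $f_4(x,y)=(1-\tfrac y2,\tfrac12-\tfrac x2)$, each copy traversed in the order inherited from $H_n$. The inflection points $r_1,\dots,r_{N(n)}$ of $H_n$ are the vertices of $H_n$, in order, after deleting every interior vertex whose two neighbouring vertices are collinear with it (endpoints kept). Affine curvatures: $t_k=r_{k+1}-r_k$, $[a,b]=a_1b_2-a_2b_1$, and for $2\le k\le N-2$ with $[t_{k-1},t_k]\ne0$, $\kappa_k=\dfrac{[t_k,t_{k+1}]}{[t_{k-1},t_k]}$,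 $\bar\kappa_k=\dfrac{[t_{k-1},t_{k+1}]}{[t_{k-1},t_k]}$. Letters and their number strings: $P=(-2,1,\tfrac12,-1,1,-1,2,1,-\tfrac12)$, $S=(2,1,-\tfrac12,1)$, $T=(3,1,\tfrac13)$, $U=(1,-2,1,\tfrac12)$, $V=(1,-1,1,-1,1)$. Words $K_n$ ($n\ge2$) over $\{P,S,T,U,V\}$: $K_2=P$; $K_{2m+1}=K_{2m}\,S\,K_{2m}\,T\,K_{2m}\,U\,K_{2m}$ for $m\ge1$; $K_{2m}=K_{2m-1}\,U\,K_{2m-1}\,V\,K_{2m-1}\,S\,K_{2m-1}$ for $m\ge2$ (so $K_3=PSPTPUP$). *)

theory Defs
  imports Complex_Main
begin

type_synonym pt = "real \<times> real"

definition f1 :: "pt \<Rightarrow> pt" where "f1 p = (snd p / 2, fst p / 2)"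
definition f2 :: "pt \<Rightarrow> pt" where "f2 p = (fst p / 2, snd p / 2 + 1/2)"
definition f3 :: "pt \<Rightarrow> pt" where "f3 p = (fst p / 2 + 1/2, snd p / 2 + 1/2)"
definition f4 :: "pt \<Rightarrow> pt" where "f4 p = (1 - snd p / 2, 1/2 - fst p / 2)"

text \<open>Vertex list of the Hilbert polygon H_n (n >= 1); hilbert 0 is unused.\<close>
fun hilbert :: "nat \<Rightarrow> pt list" where
  "hilbert 0 = []"
| "hilbert (Suc 0) = [(1/4,1/4), (1/4,3/4), (3/4,3/4), (3/4,1/4)]"
| "hilbert (Suc (Suc n)) =
     map f1 (hilbert (Suc n)) @ map f2 (hilbert (Suc n)) @
     map f3 (hilbert (Suc n)) @ map f4 (hilbert (Suc n))"

definition brk :: "pt \<Rightarrow> pt \<Rightarrow> real" where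
  "brk a b = fst a * snd b - snd a * fst b"

definition vsub :: "pt \<Rightarrow> pt \<Rightarrow> pt" where
  "vsub a b = (fst a - fst b, snd a - snd b)"

definition collinear3 :: "pt \<Rightarrow> pt \<Rightarrow> pt \<Rightarrow> bool" where
  "collinear3 a b c \<longleftrightarrow> brk (vsub b a) (vsub c b) = 0"

text \<open>Inflection points: delete every interior vertex collinear with its two
  neighbouring vertices (neighbours taken in the original polygon); endpoints kept.\<close>
definition inflection :: "pt list \<Rightarrow> pt list" where
  "inflection vs = [vs ! i. i \<leftarrow> [0..<length vs],
      i = 0 \<or> i = length vs - 1 \<or> \<not> collinear3 (vs ! (i - 1)) (vs ! i) (vs ! (i + 1))]"

text \<open>1-based indexing: r_k = r ! (k-1); t_k = r_{k+1} - r_k.\<close>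
definition tv :: "pt list \<Rightarrow> nat \<Rightarrow> pt" where
  "tv r k = vsub (r ! k) (r ! (k - 1))"

definition kappa :: "pt list \<Rightarrow> nat \<Rightarrow> real" where
  "kappa r k = brk (tv r k) (tv r (k + 1)) / brk (tv r (k - 1)) (tv r k)"

definition kappabar :: "pt list \<Rightarrow> nat \<Rightarrow> real" where
  "kappabar r k = brk (tv r (k - 1)) (tv r (k + 1)) / brk (tv r (k - 1)) (tv r k)"

definition affmap :: "real \<Rightarrow> real \<Rightarrow> real \<Rightarrow> real \<Rightarrow> real \<Rightarrow> real \<Rightarrow> pt \<Rightarrow> pt" where
  "affmap a11 a12 a21 a22 b1 b2 p =
     (a11 * fst p + a12 * snd p + b1, a21 * fst p + a22 * snd p + b2)"

datatype letter = P | S | T | U | V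

fun numstr :: "letter \<Rightarrow> real list" where
  "numstr P = [-2, 1, 1/2, -1, 1, -1, 2, 1, -1/2]"
| "numstr S = [2, 1, -1/2, 1]"
| "numstr T = [3, 1, 1/3]"
| "numstr U = [1, -2, 1, 1/2]"
| "numstr V = [1, -1, 1, -1, 1]"

text \<open>Words K_n for n >= 2 (K 0, K 1 unused).\<close>
fun K :: "nat \<Rightarrow> letter list" where
  "K 0 = []"
| "K (Suc 0) = []"
| "K (Suc (Suc 0)) = [P]"
| "K (Suc (Suc (Suc m))) =
     (let w = K (Suc (Suc m)) in
      if even m then w @ [S] @ w @ [T] @ w @ [U] @ w
      else w @ [U] @ w @ [V] @ w @ [S] @ w)"

end

theory Submission
  imports Defs
begin

fun inner :: "pt list \<Rightarrow> pt list" where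
  "inner (a # b # c # rest) = (if collinear3 a b c then [] else [b]) @ inner (b # c # rest)"
| "inner _ = []"

lemma inner_nth:
  "inner vs = map (\<lambda>i. vs ! i) (filter (\<lambda>i. \<not> collinear3 (vs ! (i - 1)) (vs ! i) (vs ! (i + 1))) [1..<length vs - 1])"
proof (induction vs rule: inner.induct)
  case (1 a b c rest)
  let ?w = "b # c # rest"
  have u: "[1..<length (a # ?w) - 1] = 1 # map Suc [1..<length ?w - 1]"
    by (simp add: upt_conv_Cons map_Suc_upt del: upt_Suc)
  have f: "filter (\<lambda>i. \<not> collinear3 ((a # ?w) ! (i - 1)) ((a # ?w) ! i) ((a # ?w) ! (i + 1))) (map Suc [1..<length ?w - 1])
      = map Suc (filter (\<lambda>i. \<not> collinear3 (?w ! (i - 1)) (?w ! i) (?w ! (i + 1))) [1..<length ?w - 1])"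
  proof -
    have "filter (\<lambda>i. \<not> collinear3 ((a # ?w) ! (i - 1)) ((a # ?w) ! i) ((a # ?w) ! (i + 1))) (map Suc [1..<length ?w - 1])
       = map Suc (filter ((\<lambda>i. \<not> collinear3 ((a # ?w) ! (i - 1)) ((a # ?w) ! i) ((a # ?w) ! (i + 1))) \<circ> Suc) [1..<length ?w - 1])"
      by (simp add: filter_map)
    also have "filter ((\<lambda>i. \<not> collinear3 ((a # ?w) ! (i - 1)) ((a # ?w) ! i) ((a # ?w) ! (i + 1))) \<circ> Suc) [1..<length ?w - 1]
       = filter (\<lambda>i. \<not> collinear3 (?w ! (i - 1)) (?w ! i) (?w ! (i + 1))) [1..<length ?w - 1]"
      by (rule filter_cong) (auto simp: nth_Cons')
    finally show ?thesis .
  qed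
  let ?P = "\<lambda>i. \<not> collinear3 ((a # ?w) ! (i - 1)) ((a # ?w) ! i) ((a # ?w) ! (i + 1))"
  let ?Q = "\<lambda>i. \<not> collinear3 (?w ! (i - 1)) (?w ! i) (?w ! (i + 1))"
  have "map (\<lambda>i. (a # ?w) ! i) (filter ?P [1..<length (a # ?w) - 1])
     = map (\<lambda>i. (a # ?w) ! i) (filter ?P (1 # map Suc [1..<length ?w - 1]))"
    by (simp only: u)
  also have "\<dots> = (if collinear3 a b c then [] else [b]) @ map (\<lambda>i. (a # ?w) ! i) (map Suc (filter ?Q [1..<length ?w - 1]))"
    by (simp only: filter.simps(2) f) simp
  also have "map (\<lambda>i. (a # ?w) ! i) (map Suc (filter ?Q [1..<length ?w - 1])) = map (\<lambda>i. ?w ! i) (filter ?Q [1..<length ?w - 1])"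
    by simp
  finally show ?case using 1 by simp
qed auto

lemma concat_map_if: "concat (map (\<lambda>i. if Q i then [f i] else []) xs) = map f (filter Q xs)"
  by (induction xs) auto

lemma inflection_split:
  assumes "length vs \<ge> 2"
  shows "inflection vs = hd vs # inner vs @ [last vs]"
proof -
  let ?L = "length vs"
  obtain m where m: "?L = Suc (Suc m)" using assms by (metis add_2_eq_Suc le_Suc_ex)
  have u: "[0..<?L] = 0 # [1..<?L - 1] @ [?L - 1]"
  proof -
    have a: "[0..<Suc (Suc m)] = [0..<Suc m] @ [Suc m]" by (rule upt_Suc_append) simp
    have b: "[0..<Suc m] = 0 # [Suc 0..<Suc m]" by (rule upt_conv_Cons) simp
    show ?thesis unfolding m a b by simp
  qed
  have c: "filter (\<lambda>i. i = 0 \<or> i = ?L - 1 \<or> \<not> collinear3 (vs ! (i - 1)) (vs ! i) (vs ! (i + 1))) [1..<?L - 1]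
     = filter (\<lambda>i. \<not> collinear3 (vs ! (i - 1)) (vs ! i) (vs ! (i + 1))) [1..<?L - 1]"
    by (rule filter_cong) auto
  show ?thesis
    unfolding inflection_def inner_nth
    apply (subst u)
    using assms c m by (simp add: hd_conv_nth last_conv_nth concat_map_if del: upt_Suc)
      (metis hd_conv_nth last_conv_nth list.size(3) nat.distinct(1) diff_Suc_1)
qed

lemma inner_append:
  assumes "length A \<ge> 2" "length B \<ge> 2"
  shows "inner (A @ B) = inner A @ (if collinear3 (last (butlast A)) (last A) (hd B) then [] else [last A])
     @ (if collinear3 (last A) (hd B) (hd (tl B)) then [] else [hd B]) @ inner B"
  using assms
proof (induction A rule: inner.induct)
  case (1 a b c rest)
  then show ?case by (cases rest) auto
next
  case ("2_3" a b)
  then obtain x y B' where "B = x # y # B'"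
    by (metis Suc_le_length_iff numeral_2_eq_2)
  then show ?case by simp
qed auto

definition det2 :: "real \<Rightarrow> real \<Rightarrow> real \<Rightarrow> real \<Rightarrow> real" where
  "det2 a11 a12 a21 a22 = a11 * a22 - a12 * a21"

lemma brk_aff:
  "brk (vsub (affmap a11 a12 a21 a22 b1 b2 b) (affmap a11 a12 a21 a22 b1 b2 a))
       (vsub (affmap a11 a12 a21 a22 b1 b2 d) (affmap a11 a12 a21 a22 b1 b2 c))
   = (a11 * a22 - a12 * a21) * brk (vsub b a) (vsub d c)"
  unfolding brk_def vsub_def affmap_def by (simp add: algebra_simps)

lemma collinear3_aff:
  assumes "a11 * a22 - a12 * a21 \<noteq> 0"
  shows "collinear3 (affmap a11 a12 a21 a22 b1 b2 a) (affmap a11 a12 a21 a22 b1 b2 b) (affmap a11 a12 a21 a22 b1 b2 c)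
     = collinear3 a b c"
  unfolding collinear3_def brk_aff using assms by simp

lemma inner_aff:
  assumes "a11 * a22 - a12 * a21 \<noteq> 0"
  shows "inner (map (affmap a11 a12 a21 a22 b1 b2) L) = map (affmap a11 a12 a21 a22 b1 b2) (inner L)"
  by (induction L rule: inner.induct) (auto simp: collinear3_aff[OF assms])

lemma inflection_aff:
  assumes "a11 * a22 - a12 * a21 \<noteq> 0" "length L \<ge> 2"
  shows "inflection (map (affmap a11 a12 a21 a22 b1 b2) L) = map (affmap a11 a12 a21 a22 b1 b2) (inflection L)"
proof -
  have "L \<noteq> []" using assms by auto
  then show ?thesis using assms
    by (simp add: inflection_split inner_aff hd_map last_map)
qed

lemma f1_aff: "f1 = affmap 0 (1/2) (1/2) 0 0 0"
  by (auto simp: fun_eq_iff f1_def affmap_def)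
lemma f2_aff: "f2 = affmap (1/2) 0 0 (1/2) 0 (1/2)"
  by (auto simp: fun_eq_iff f2_def affmap_def)
lemma f3_aff: "f3 = affmap (1/2) 0 0 (1/2) (1/2) (1/2)"
  by (auto simp: fun_eq_iff f3_def affmap_def)
lemma f4_aff: "f4 = affmap 0 (-1/2) (-1/2) 0 1 (1/2)"
  by (auto simp: fun_eq_iff f4_def affmap_def)

lemma inner_f:
  "inner (map f1 L) = map f1 (inner L)" "inner (map f2 L) = map f2 (inner L)"
  "inner (map f3 L) = map f3 (inner L)" "inner (map f4 L) = map f4 (inner L)"
  unfolding f1_aff f2_aff f3_aff f4_aff by (rule inner_aff; simp)+

fun W :: "(pt \<Rightarrow> pt \<Rightarrow> pt \<Rightarrow> pt \<Rightarrow> 'b) \<Rightarrow> pt list \<Rightarrow> 'b list" where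
  "W F (a # b # c # d # rest) = F a b c d # W F (b # c # d # rest)"
| "W F _ = []"

lemma list_cases4:
  obtains "L = []" | x where "L = [x]" | x y where "L = [x, y]" | x y z where "L = [x, y, z]"
   | x y z u r where "L = x # y # z # u # r"
  by (metis list.exhaust)

lemma W_Cons: "W F (a # L) = (if length L \<ge> 3 then F a (L!0) (L!1) (L!2) # W F L else [])"
  by (cases L rule: list_cases4) auto

lemma W_short: "length L \<le> 3 \<Longrightarrow> W F L = []"
  by (cases L rule: list_cases4) auto

lemma W_nth: "W F L = map (\<lambda>j. F (L!j) (L!(j+1)) (L!(j+2)) (L!(j+3))) [0..<length L - 3]"
proof (induction F L rule: W.induct)
  case (1 F a b c d rest)
  have "[0..<length (a # b # c # d # rest) - 3] = 0 # map Suc [0..<length (b # c # d # rest) - 3]"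
    by (simp add: upt_conv_Cons map_Suc_upt del: upt_Suc)
  then show ?case using 1 by simp
qed auto

lemma length_W: "length (W F L) = length L - 3"
  by (simp add: W_nth)

lemma W_append1: "W F (A @ B) = W F (A @ take 3 B) @ W F B"
proof (induction A)
  case Nil
  then show ?case by (simp add: W_short)
next
  case (Cons a A)
  show ?case
  proof (cases "length (A @ B) \<ge> 3")
    case True
    then have "3 \<le> length (A @ take 3 B)" by auto
    moreover have "(A @ B) ! i = (A @ take 3 B) ! i" if "i < 3" for i
      using that by (auto simp: nth_append)
    ultimately show ?thesis using True Cons by (simp only: append_Cons W_Cons) auto
  next
    case False
    then have "W F B = []" by (intro W_short) auto
    moreover have "\<not> 3 \<le> length (A @ take 3 B)" using False by auto
    ultimately show ?thesis using False by (simp only: append_Cons W_Cons) auto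
  qed
qed

lemma W_append2: "length A \<ge> 3 \<Longrightarrow> W F (A @ B) = W F A @ W F (drop (length A - 3) A @ B)"
proof (induction A)
  case Nil
  then show ?case by simp
next
  case (Cons a A)
  show ?case
  proof (cases "length A \<ge> 3")
    case True
    have "(A @ B) ! i = A ! i" if "i < 3" for i using that True by (auto simp: nth_append)
    moreover have "length A - 2 = Suc (length A - 3)" using True by simp
    ultimately show ?thesis using True Cons
      by (simp only: append_Cons W_Cons) (auto simp: Suc_diff_le)
  next
    case False
    then have "length A = 2" using Cons.prems by auto
    then show ?thesis by (simp add: W_short)
  qed
qed

lemma W_join:
  assumes "length A \<ge> 3" "length B \<ge> 3"
  shows "W F (A @ B @ R) = W F A @ W F (drop (length A - 3) A @ take 3 B) @ W F (B @ R)"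
proof -
  have "W F (A @ B @ R) = W F A @ W F (drop (length A - 3) A @ (B @ R))"
    using W_append2 assms by blast
  also have "W F (drop (length A - 3) A @ (B @ R)) = W F (drop (length A - 3) A @ take 3 (B @ R)) @ W F (B @ R)"
    by (rule W_append1)
  also have "take 3 (B @ R) = take 3 B" using assms by simp
  finally show ?thesis by simp
qed

lemma W_map: "(\<And>a b c d. F (g a) (g b) (g c) (g d) = F a b c d) \<Longrightarrow> W F (map g L) = W F L"
  by (induction F L rule: W.induct) auto

lemma W_tl: "W F (tl L) = tl (W F L)"
  by (cases L) (auto simp: W_Cons W_short)

lemma W_butlast: "W F (butlast L) = butlast (W F L)"
proof (induction L)
  case Nil
  then show ?case by simp
next
  case (Cons a L)
  show ?case
  proof (cases "length L \<ge> 4")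
    case True
    then have "W F L \<noteq> []" using length_W[of F L] by auto
    moreover have "butlast L ! i = L ! i" if "i < 3" for i using that True by (simp add: nth_butlast)
    ultimately show ?thesis using True Cons by (auto simp: W_Cons)
  next
    case False
    then show ?thesis by (auto simp: W_Cons W_short)
  qed
qed

definition Fk :: "pt \<Rightarrow> pt \<Rightarrow> pt \<Rightarrow> pt \<Rightarrow> bool \<times> real" where
  "Fk a b c d = (brk (vsub b a) (vsub c b) \<noteq> 0 \<and> brk (vsub b a) (vsub d c) = 0,
     brk (vsub c b) (vsub d c) / brk (vsub b a) (vsub c b))"

lemma Fk_aff:
  assumes "a11 * a22 - a12 * a21 \<noteq> 0"
  shows "Fk (affmap a11 a12 a21 a22 b1 b2 a) (affmap a11 a12 a21 a22 b1 b2 b) (affmap a11 a12 a21 a22 b1 b2 c)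
      (affmap a11 a12 a21 a22 b1 b2 d) = Fk a b c d"
  unfolding Fk_def brk_aff using assms by simp

lemma W_aff:
  assumes "a11 * a22 - a12 * a21 \<noteq> 0"
  shows "W Fk (map (affmap a11 a12 a21 a22 b1 b2) L) = W Fk L"
  by (rule W_map) (rule Fk_aff[OF assms])

lemma W_f:
  "W Fk (map f1 L) = W Fk L" "W Fk (map f2 L) = W Fk L"
  "W Fk (map f3 L) = W Fk L" "W Fk (map f4 L) = W Fk L"
  unfolding f1_aff f2_aff f3_aff f4_aff by (rule W_aff; simp)+

lemma hdtl_map_app: "length H \<ge> 2 \<Longrightarrow> hd (tl (map f H @ R)) = f (hd (tl H))"
  by (cases H rule: list_cases4) auto
lemma hd_map_app: "length H \<ge> 2 \<Longrightarrow> hd (map f H @ R) = f (hd H)"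
  by (cases H rule: list_cases4) auto
lemma lastbl_map: "length H \<ge> 2 \<Longrightarrow> last (butlast (map f H)) = f (last (butlast H))"
proof -
  assume "length H \<ge> 2"
  then have "butlast H \<noteq> []" by (cases H rule: list_cases4) auto
  then show ?thesis by (simp add: map_butlast[symmetric] last_map)
qed
lemma last_map': "length H \<ge> 2 \<Longrightarrow> last (map f H) = f (last H)"
  by (cases H) (auto simp: last_map)
lemma lastbl_app: "length B \<ge> 2 \<Longrightarrow> last (butlast (A @ B)) = last (butlast B)"
  by (cases B rule: rev_cases; cases "butlast B" rule: rev_cases) (auto simp: butlast_append)

definition hh :: "nat \<Rightarrow> real" where "hh n = 1 / 2 ^ n"

lemma hh_Suc: "hh (Suc n) = hh n / 2" by (simp add: hh_def)
lemma hh_pos: "hh n > 0" by (simp add: hh_def)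
lemma hh_1: "hh (Suc 0) = 1/2" by (simp add: hh_def)

definition p1 :: "nat \<Rightarrow> pt" where
  "p1 n = (if odd n then (hh n / 2, 3 * hh n / 2) else (3 * hh n / 2, hh n / 2))"
definition q1 :: "nat \<Rightarrow> pt" where
  "q1 n = (if odd n then (1 - hh n / 2, 3 * hh n / 2) else (1 - 3 * hh n / 2, hh n / 2))"

lemma hil_rec: "n \<ge> 1 \<Longrightarrow> hilbert (Suc n) =
   map f1 (hilbert n) @ map f2 (hilbert n) @ map f3 (hilbert n) @ map f4 (hilbert n)"
  by (cases n) auto

lemma HInv:
  assumes "n \<ge> 1"
  shows "length (hilbert n) \<ge> 4 \<and> hd (hilbert n) = (hh n / 2, hh n / 2) \<and> hd (tl (hilbert n)) = p1 n
    \<and> last (hilbert n) = (1 - hh n / 2, hh n / 2) \<and> last (butlast (hilbert n)) = q1 n"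
  using assms
proof (induction n rule: nat_induct_at_least)
  case base
  then show ?case by (simp add: hh_1 p1_def q1_def)
next
  case (Suc n)
  let ?H = "hilbert n"
  from Suc have L: "length ?H \<ge> 4" by simp
  then have ne: "?H \<noteq> []" "tl ?H \<noteq> []" "butlast ?H \<noteq> []"
    by (auto simp: length_greater_0_conv[symmetric] simp del: length_greater_0_conv)
  have L2: "length ?H \<ge> 2" using L by simp
  have n1: "n \<ge> 1" using Suc by simp
  have a1: "hd (hilbert (Suc n)) = f1 (hd ?H)" unfolding hil_rec[OF n1] by (rule hd_map_app[OF L2])
  have a2: "hd (tl (hilbert (Suc n))) = f1 (hd (tl ?H))" unfolding hil_rec[OF n1] by (rule hdtl_map_app[OF L2])
  have ne4: "map f4 ?H \<noteq> []" using L2 by auto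
  have "last (hilbert (Suc n)) = last (map f4 ?H)" unfolding hil_rec[OF n1] using ne4 by simp
  then have a3: "last (hilbert (Suc n)) = f4 (last ?H)" using last_map'[OF L2] by simp
  have a4: "last (butlast (hilbert (Suc n))) = f4 (last (butlast ?H))" unfolding hil_rec[OF n1]
    using L2 by (simp add: lastbl_app lastbl_map)
  have a5: "length (hilbert (Suc n)) \<ge> 4" unfolding hil_rec[OF n1] using L by simp
  show ?case unfolding a1 a2 a3 a4 using Suc a5
    by (simp add: hh_Suc p1_def q1_def f1_def f4_def field_simps)
qed

lemma inner_app3:
  assumes L: "length H \<ge> 2" and f: "inner (map f H) = map f (inner H)"
  shows "inner (map f H @ map g H @ R) = map f (inner H)
     @ (if collinear3 (f (last (butlast H))) (f (last H)) (g (hd H)) then [] else [f (last H)])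
     @ (if collinear3 (f (last H)) (g (hd H)) (g (hd (tl H))) then [] else [g (hd H)])
     @ inner (map g H @ R)"
proof -
  have "inner (map f H @ (map g H @ R)) = inner (map f H)
     @ (if collinear3 (last (butlast (map f H))) (last (map f H)) (hd (map g H @ R)) then [] else [last (map f H)])
     @ (if collinear3 (last (map f H)) (hd (map g H @ R)) (hd (tl (map g H @ R))) then [] else [hd (map g H @ R)])
     @ inner (map g H @ R)"
    by (rule inner_append) (use L in auto)
  also have "\<dots> = map f (inner H)
     @ (if collinear3 (f (last (butlast H))) (f (last H)) (g (hd H)) then [] else [f (last H)])
     @ (if collinear3 (f (last H)) (g (hd H)) (g (hd (tl H))) then [] else [g (hd H)])
     @ inner (map g H @ R)"
    by (simp only: f lastbl_map[OF L] last_map'[OF L] hd_map_app[OF L] hdtl_map_app[OF L])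
  finally show ?thesis by simp
qed

lemma C_rec:
  assumes "n \<ge> 1"
  shows "inflection (hilbert (Suc n)) = (if odd n
     then map f1 (inflection (hilbert n)) @ map f2 (tl (inflection (hilbert n)))
        @ map f3 (butlast (inflection (hilbert n))) @ map f4 (inflection (hilbert n))
     else map f1 (butlast (inflection (hilbert n))) @ map f2 (butlast (inflection (hilbert n)))
        @ map f3 (tl (inflection (hilbert n))) @ map f4 (tl (inflection (hilbert n))))"
proof -
  let ?H = "hilbert n"
  note HI = HInv[OF assms]
  have L: "length ?H \<ge> 2" using HI by simp
  have C: "inflection ?H = hd ?H # inner ?H @ [last ?H]" using inflection_split L by blast
  have hh0: "hh n > 0" by (rule hh_pos)
  have i3: "inner (map f3 ?H @ map f4 ?H) = map f3 (inner ?H)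
     @ (if collinear3 (f3 (last (butlast ?H))) (f3 (last ?H)) (f4 (hd ?H)) then [] else [f3 (last ?H)])
     @ (if collinear3 (f3 (last ?H)) (f4 (hd ?H)) (f4 (hd (tl ?H))) then [] else [f4 (hd ?H)])
     @ map f4 (inner ?H)"
    using inner_app3[OF L inner_f(3), where g=f4 and R="[]"] by (simp add: inner_f)
  have e: "inflection (hilbert (Suc n)) =
     f1 (hd ?H) # (map f1 (inner ?H)
     @ (if collinear3 (f1 (last (butlast ?H))) (f1 (last ?H)) (f2 (hd ?H)) then [] else [f1 (last ?H)])
     @ (if collinear3 (f1 (last ?H)) (f2 (hd ?H)) (f2 (hd (tl ?H))) then [] else [f2 (hd ?H)])
     @ map f2 (inner ?H)
     @ (if collinear3 (f2 (last (butlast ?H))) (f2 (last ?H)) (f3 (hd ?H)) then [] else [f2 (last ?H)])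
     @ (if collinear3 (f2 (last ?H)) (f3 (hd ?H)) (f3 (hd (tl ?H))) then [] else [f3 (hd ?H)])
     @ inner (map f3 ?H @ map f4 ?H)) @ [f4 (last ?H)]"
  proof -
    have ne4: "map f4 ?H \<noteq> []" using L by auto
    have l2: "length (hilbert (Suc n)) \<ge> 2" unfolding hil_rec[OF assms] using L by simp
    have "inflection (hilbert (Suc n)) = hd (hilbert (Suc n)) # inner (hilbert (Suc n)) @ [last (hilbert (Suc n))]"
      by (rule inflection_split[OF l2])
    also have "hd (hilbert (Suc n)) = f1 (hd ?H)" unfolding hil_rec[OF assms] by (rule hd_map_app[OF L])
    also have "last (hilbert (Suc n)) = f4 (last ?H)"
      unfolding hil_rec[OF assms] using ne4 last_map'[OF L] by simp
    also have "inner (hilbert (Suc n)) = map f1 (inner ?H)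
     @ (if collinear3 (f1 (last (butlast ?H))) (f1 (last ?H)) (f2 (hd ?H)) then [] else [f1 (last ?H)])
     @ (if collinear3 (f1 (last ?H)) (f2 (hd ?H)) (f2 (hd (tl ?H))) then [] else [f2 (hd ?H)])
     @ map f2 (inner ?H)
     @ (if collinear3 (f2 (last (butlast ?H))) (f2 (last ?H)) (f3 (hd ?H)) then [] else [f2 (last ?H)])
     @ (if collinear3 (f2 (last ?H)) (f3 (hd ?H)) (f3 (hd (tl ?H))) then [] else [f3 (hd ?H)])
     @ inner (map f3 ?H @ map f4 ?H)"
      unfolding hil_rec[OF assms]
      by (simp only: inner_app3[OF L inner_f(1)] inner_app3[OF L inner_f(2)] append_assoc)
    finally show ?thesis .
  qed
  have HI': "hd ?H = (hh n / 2, hh n / 2)" "hd (tl ?H) = p1 n" "last ?H = (1 - hh n / 2, hh n / 2)"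
    "last (butlast ?H) = q1 n" using HI by auto
  show ?thesis
  proof (cases "odd n")
    case True
    then show ?thesis unfolding e i3 C HI'
      using hh0 by (simp add: collinear3_def brk_def vsub_def f1_def f2_def f3_def f4_def p1_def q1_def field_simps)
  next
    case False
    then show ?thesis unfolding e i3 C HI'
      using hh0 by (simp add: collinear3_def brk_def vsub_def f1_def f2_def f3_def f4_def p1_def q1_def field_simps)
  qed
qed


definition first4 :: "nat \<Rightarrow> pt list" where
  "first4 n = (let h = hh n in if odd n
     then [(h/2, h/2), (h/2, 3*h/2), (3*h/2, 3*h/2), (3*h/2, h/2)]
     else [(h/2, h/2), (3*h/2, h/2), (3*h/2, 3*h/2), (h/2, 3*h/2)])"
definition last4 :: "nat \<Rightarrow> pt list" where
  "last4 n = (let h = hh n in if odd n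
     then [(1 - 3*h/2, h/2), (1 - 3*h/2, 3*h/2), (1 - h/2, 3*h/2), (1 - h/2, h/2)]
     else [(1 - h/2, 3*h/2), (1 - 3*h/2, 3*h/2), (1 - 3*h/2, h/2), (1 - h/2, h/2)])"

lemma drop_last4: "length B \<ge> 4 \<Longrightarrow> drop (length (A @ B) - 4) (A @ B) = drop (length B - 4) B"
  by simp
lemma drop_tl4: "length C \<ge> 5 \<Longrightarrow> drop (length (tl C) - 4) (tl C) = drop (length C - 4) C"
proof (cases C)
  case (Cons a list)
  assume "length C \<ge> 5"
  then have "length list - 3 = Suc (length list - 4)" using Cons by simp
  then show ?thesis using Cons by simp
qed simp
lemma take_butlast4: "length C \<ge> 5 \<Longrightarrow> take 4 (butlast C) = take 4 C"
  by (simp add: take_butlast)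
lemma take_app4: "length A \<ge> 4 \<Longrightarrow> take 4 (A @ B) = take 4 A"
  by simp

lemma CInv:
  assumes "n \<ge> 1"
  shows "length (inflection (hilbert n)) \<ge> 4 * n \<and> take 4 (inflection (hilbert n)) = first4 n
     \<and> drop (length (inflection (hilbert n)) - 4) (inflection (hilbert n)) = last4 n"
  using assms
proof (induction n rule: nat_induct_at_least)
  case base
  have "inflection (hilbert 1) = hilbert 1"
    by (simp add: inflection_split collinear3_def brk_def vsub_def)
  then show ?case by (simp add: first4_def last4_def hh_1)
next
  case (Suc n)
  let ?C = "inflection (hilbert n)"
  have L: "length ?C \<ge> 4 * n" and T: "take 4 ?C = first4 n" and D: "drop (length ?C - 4) ?C = last4 n"
    using Suc by auto
  have hh0: "hh n > 0" by (rule hh_pos)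
  show ?case
  proof (cases "odd n")
    case True
    have L4: "length ?C \<ge> 4" using L Suc by linarith
    have t: "take 4 (inflection (hilbert (Suc n))) = map f1 (first4 n)"
      unfolding C_rec[OF Suc(1)] using True L4 T by (simp add: take_map T[symmetric])
    have d: "drop (length (inflection (hilbert (Suc n))) - 4) (inflection (hilbert (Suc n))) = map f4 (last4 n)"
      unfolding C_rec[OF Suc(1)] using True L4
      by (simp only: if_True drop_last4 length_map length_append length_tl length_butlast)
        (simp add: drop_map D[symmetric])
    have l: "length (inflection (hilbert (Suc n))) \<ge> 4 * Suc n"
      unfolding C_rec[OF Suc(1)] using True L4 L by simp
    show ?thesis unfolding t d using l True hh0
      by (simp add: first4_def last4_def hh_Suc f1_def f4_def Let_def field_simps)
  next
    case False
    have "n \<ge> 2" using Suc(1) False by presburger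
    then have L5: "length ?C \<ge> 5" using L by linarith
    have dt: "drop (length ?C - 5) (tl ?C) = last4 n"
      using drop_tl4[OF L5] D by (simp add: numeral_eq_Suc)
    have t: "take 4 (inflection (hilbert (Suc n))) = map f1 (first4 n)"
      unfolding C_rec[OF Suc(1)] using False L5 T
      by (simp add: take_map take_butlast4 T[symmetric])
    have d: "drop (length (inflection (hilbert (Suc n))) - 4) (inflection (hilbert (Suc n))) = map f4 (last4 n)"
      unfolding C_rec[OF Suc(1)] using False L5
      by (simp only: if_False drop_last4 length_map length_append length_tl length_butlast)
        (use dt in \<open>simp add: drop_map\<close>)
    have l: "length (inflection (hilbert (Suc n))) \<ge> 4 * Suc n"
      unfolding C_rec[OF Suc(1)] using False L5 L by simp
    show ?thesis unfolding t d using l False hh0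
      by (simp add: first4_def last4_def hh_Suc f1_def f4_def Let_def field_simps)
  qed
qed


lemma pieces:
  assumes L: "length C \<ge> 5" and T: "take 4 C = F" and D: "drop (length C - 4) C = D"
  shows "drop (length C - 3) C = tl D" "take 3 (tl C) = tl F"
    "drop (length (butlast C) - 3) (butlast C) = butlast D" "take 3 C = butlast F"
    "drop (length (tl C) - 3) (tl C) = tl D" "take 3 (butlast C) = butlast F"
proof -
  obtain a b c d M where M: "C = [a, b, c, d] @ M"
    using L by (cases C rule: list_cases4) (auto simp: numeral_eq_Suc)
  obtain a' b' c' d' where E: "drop (length C - 4) C = [a', b', c', d']"
  proof -
    have ld: "length (drop (length C - 4) C) = 4" using L by simp
    show ?thesis using that ld by (cases "drop (length C - 4) C" rule: list_cases4) auto
  qed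
  define M' where "M' = take (length C - 4) C"
  have M': "C = M' @ [a', b', c', d']" unfolding M'_def E[symmetric] by simp
  have F: "F = [a, b, c, d]" using T M by simp
  have DD: "D = [a', b', c', d']" using D M' by simp
  show "drop (length C - 3) C = tl D" using M' DD by simp
  show "take 3 (tl C) = tl F" using M F by simp
  show "drop (length (butlast C) - 3) (butlast C) = butlast D" using M' DD by (simp add: butlast_append)
  show "take 3 C = butlast F" using M F by simp
  show "drop (length (tl C) - 3) (tl C) = tl D" using M' DD L by (cases M') auto
  show "take 3 (butlast C) = butlast F" using M F L by (cases M rule: rev_cases) (auto simp: butlast_append)
qed

lemma J_odd:
  assumes "odd n"
  shows "W Fk (map f1 (tl (last4 n)) @ map f2 (tl (first4 n))) = map (Pair True) [-2, 1, 1/2]"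
    "W Fk (map f2 (tl (last4 n)) @ map f3 (butlast (first4 n))) = map (Pair True) [-1, 1, -1]"
    "W Fk (map f3 (butlast (last4 n)) @ map f4 (butlast (first4 n))) = map (Pair True) [2, 1, -1/2]"
  using assms hh_pos[of n]
  by (simp_all add: first4_def last4_def Let_def Fk_def brk_def vsub_def f1_def f2_def f3_def f4_def field_simps)

lemma J_even:
  assumes "even n"
  shows "W Fk (map f1 (butlast (last4 n)) @ map f2 (butlast (first4 n))) = map (Pair True) [2, 1, -1/2]"
    "W Fk (map f2 (butlast (last4 n)) @ map f3 (tl (first4 n))) = map (Pair True) [3, 1, 1/3]"
    "W Fk (map f3 (tl (last4 n)) @ map f4 (tl (first4 n))) = map (Pair True) [-2, 1, 1/2]"
  using assms hh_pos[of n]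
  by (simp_all add: first4_def last4_def Let_def Fk_def brk_def vsub_def f1_def f2_def f3_def f4_def field_simps)


lemma W_join3:
  assumes "length B1 \<ge> 3" "length B2 \<ge> 3" "length B3 \<ge> 3" "length B4 \<ge> 3"
  shows "W F (B1 @ B2 @ B3 @ B4) = W F B1 @ W F (drop (length B1 - 3) B1 @ take 3 B2)
     @ W F B2 @ W F (drop (length B2 - 3) B2 @ take 3 B3)
     @ W F B3 @ W F (drop (length B3 - 3) B3 @ take 3 B4) @ W F B4"
proof -
  have e: "W F (B3 @ B4) = W F B3 @ W F (drop (length B3 - 3) B3 @ take 3 B4) @ W F B4"
    using W_join[OF assms(3,4), of F "[]"] by simp
  show ?thesis using W_join[OF assms(1,2), of F "B3 @ B4"] W_join[OF assms(2,3), of F B4] e by simp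
qed

lemma K_Suc:
  assumes "n \<ge> 2"
  shows "K (Suc n) = (if odd n then K n @ [U] @ K n @ [V] @ K n @ [S] @ K n
                      else K n @ [S] @ K n @ [T] @ K n @ [U] @ K n)"
proof -
  obtain m where m: "n = Suc (Suc m)" using assms by (metis add_2_eq_Suc le_Suc_ex)
  show ?thesis unfolding m by (simp add: Let_def)
qed

lemma KStep:
  assumes n2: "n \<ge> 2"
    and IH: "W Fk (inflection (hilbert n)) = map (Pair True) ([1] @ concat (map numstr (K n)) @ [1])"
  shows "W Fk (inflection (hilbert (Suc n))) = map (Pair True) ([1] @ concat (map numstr (K (Suc n))) @ [1])"
proof -
  let ?C = "inflection (hilbert n)"
  let ?k = "concat (map numstr (K n))"
  have n1: "n \<ge> 1" using n2 by simp
  note CI = CInv[OF n1]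
  have L: "length ?C \<ge> 8" using CI n2 by linarith
  then have L5: "length ?C \<ge> 5" by simp
  note P = pieces[OF L5, of "first4 n" "last4 n"]
  have P1: "drop (length ?C - 3) ?C = tl (last4 n)" "take 3 (tl ?C) = tl (first4 n)"
    "drop (length (butlast ?C) - 3) (butlast ?C) = butlast (last4 n)" "take 3 ?C = butlast (first4 n)"
    "drop (length (tl ?C) - 3) (tl ?C) = tl (last4 n)" "take 3 (butlast ?C) = butlast (first4 n)"
    using P CI by auto
  have P2: "drop (length ?C - 4) (tl ?C) = tl (last4 n)" "drop (length ?C - 4) (butlast ?C) = butlast (last4 n)"
    using P1(3,5) L by (simp_all add: numeral_eq_Suc)
  have Wt: "W Fk (tl ?C) = map (Pair True) (?k @ [1])" using IH by (simp add: W_tl map_tl)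
  have Wb: "W Fk (butlast ?C) = map (Pair True) ([1] @ ?k)" using IH by (simp add: W_butlast map_butlast)
  show ?thesis
  proof (cases "odd n")
    case True
    have "W Fk (inflection (hilbert (Suc n))) =
       W Fk (map f1 ?C @ map f2 (tl ?C) @ map f3 (butlast ?C) @ map f4 ?C)"
      using C_rec[OF n1] True by simp
    also have "\<dots> = W Fk (map f1 ?C) @ W Fk (map f1 (tl (last4 n)) @ map f2 (tl (first4 n)))
       @ W Fk (map f2 (tl ?C)) @ W Fk (map f2 (tl (last4 n)) @ map f3 (butlast (first4 n)))
       @ W Fk (map f3 (butlast ?C)) @ W Fk (map f3 (butlast (last4 n)) @ map f4 (butlast (first4 n)))
       @ W Fk (map f4 ?C)"
      by (subst W_join3) (use L in \<open>simp_all add: drop_map take_map P1 P2\<close>)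
    also have "\<dots> = map (Pair True) ([1] @ concat (map numstr (K (Suc n))) @ [1])"
      unfolding W_f J_odd[OF True] Wt Wb IH K_Suc[OF n2] using True by simp
    finally show ?thesis .
  next
    case False
    have "W Fk (inflection (hilbert (Suc n))) =
       W Fk (map f1 (butlast ?C) @ map f2 (butlast ?C) @ map f3 (tl ?C) @ map f4 (tl ?C))"
      using C_rec[OF n1] False by simp
    also have "\<dots> = W Fk (map f1 (butlast ?C)) @ W Fk (map f1 (butlast (last4 n)) @ map f2 (butlast (first4 n)))
       @ W Fk (map f2 (butlast ?C)) @ W Fk (map f2 (butlast (last4 n)) @ map f3 (tl (first4 n)))
       @ W Fk (map f3 (tl ?C)) @ W Fk (map f3 (tl (last4 n)) @ map f4 (tl (first4 n)))
       @ W Fk (map f4 (tl ?C))"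
      by (subst W_join3) (use L in \<open>simp_all add: drop_map take_map P1 P2\<close>)
    also have "\<dots> = map (Pair True) ([1] @ concat (map numstr (K (Suc n))) @ [1])"
      unfolding W_f J_even[OF False[simplified]] Wt Wb IH K_Suc[OF n2] using False by simp
    finally show ?thesis .
  qed
qed

lemma C1: "inflection (hilbert 1) = hilbert 1"
  by (simp add: inflection_split collinear3_def brk_def vsub_def)

lemma Kbase: "W Fk (inflection (hilbert 2)) = map (Pair True) ([1] @ concat (map numstr (K 2)) @ [1])"
proof -
  have "inflection (hilbert 2) = map f1 (hilbert 1) @ map f2 (tl (hilbert 1))
        @ map f3 (butlast (hilbert 1)) @ map f4 (hilbert 1)"
    using C_rec[of 1] C1 by (simp add: numeral_2_eq_2)
  then show ?thesis
    by (simp add: numeral_2_eq_2 Fk_def brk_def vsub_def f1_def f2_def f3_def f4_def)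
qed

lemma Kall: "n \<ge> 2 \<Longrightarrow> W Fk (inflection (hilbert n)) = map (Pair True) ([1] @ concat (map numstr (K n)) @ [1])"
proof (induction n rule: nat_induct_at_least)
  case base
  then show ?case by (rule Kbase)
next
  case (Suc n)
  then show ?case using KStep by blast
qed


theorem mainTheorem10:
  fixes n :: nat and a11 a12 a21 a22 b1 b2 :: real
  assumes "n \<ge> 2" and "a11 * a22 - a12 * a21 \<noteq> 0"
  shows "let r = inflection (map (affmap a11 a12 a21 a22 b1 b2) (hilbert n));
             N = length r
         in (\<forall>k. 2 \<le> k \<and> k \<le> N - 2 \<longrightarrow>
                 brk (tv r (k - 1)) (tv r k) \<noteq> 0 \<and> kappabar r k = 0)
          \<and> map (kappa r) [2..<N - 1] = [1] @ concat (map numstr (K n)) @ [1]"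
proof -
  let ?A = "affmap a11 a12 a21 a22 b1 b2"
  let ?C = "inflection (hilbert n)"
  let ?xs = "[1] @ concat (map numstr (K n)) @ [1]"
  define r where "r = inflection (map ?A (hilbert n))"
  define N where "N = length r"
  have n1: "n \<ge> 1" using assms by simp
  have LH: "length (hilbert n) \<ge> 2" using HInv[OF n1] by simp
  have r: "r = map ?A ?C" unfolding r_def by (rule inflection_aff[OF assms(2) LH])
  have N8: "N \<ge> 8" using CInv[OF n1] assms(1) unfolding N_def r by simp
  have Wr: "W Fk r = map (Pair True) ?xs"
    unfolding r W_aff[OF assms(2)] using Kall[OF assms(1)] .
  have lenxs: "length ?xs = N - 3"
    using arg_cong[OF Wr, of length] unfolding length_W N_def by simp
  have win: "Fk (r!j) (r!(j+1)) (r!(j+2)) (r!(j+3)) = (True, ?xs ! j)" if "j < N - 3" for j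
  proof -
    have "W Fk r ! j = Fk (r!j) (r!(j+1)) (r!(j+2)) (r!(j+3))"
      using that unfolding W_nth N_def by simp
    moreover have jx: "j < length ?xs" using that lenxs by simp
    moreover have "W Fk r ! j = (True, ?xs ! j)" unfolding Wr by (rule nth_map[OF jx])
    ultimately show ?thesis by simp
  qed
  have P1: "brk (tv r (k - 1)) (tv r k) \<noteq> 0 \<and> kappabar r k = 0" if "2 \<le> k" "k \<le> N - 2" for k
  proof -
    define j where "j = k - 2"
    have j: "k = j + 2" using that(1) unfolding j_def by simp
    have jl: "j < N - 3" using that N8 j by linarith
    have e1: "k - 1 = j + 1" "k - 1 - 1 = j" "k - 2 = j" using j by auto
    have tv1: "tv r (k - 1) = vsub (r!(j+1)) (r!j)" unfolding tv_def e1 by simp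
    have tv2: "tv r k = vsub (r!(j+2)) (r!(j+1))" unfolding tv_def j by (simp add: numeral_eq_Suc)
    have tv3: "tv r (k + 1) = vsub (r!(j+3)) (r!(j+2))" unfolding tv_def j by (simp add: numeral_eq_Suc)
    from win[OF jl] show ?thesis unfolding kappabar_def tv1 tv2 tv3 Fk_def by simp
  qed
  have P2: "map (kappa r) [2..<N - 1] = ?xs"
  proof (rule nth_equalityI)
    show "length (map (kappa r) [2..<N - 1]) = length ?xs" using lenxs by simp
  next
    fix i assume "i < length (map (kappa r) [2..<N - 1])"
    then have i: "i < N - 3" by simp
    have tv1: "tv r (2 + i - 1) = vsub (r!(i+1)) (r!i)" unfolding tv_def by (simp add: numeral_eq_Suc)
    have tv2: "tv r (2 + i) = vsub (r!(i+2)) (r!(i+1))" unfolding tv_def by (simp add: numeral_eq_Suc)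
    have tv3: "tv r (2 + i + 1) = vsub (r!(i+3)) (r!(i+2))" unfolding tv_def by (simp add: numeral_eq_Suc)
    have "map (kappa r) [2..<N - 1] ! i = kappa r (2 + i)" using i by simp
    also have "\<dots> = snd (Fk (r!i) (r!(i+1)) (r!(i+2)) (r!(i+3)))"
      unfolding kappa_def tv1 tv2 tv3 Fk_def by simp
    also have "\<dots> = ?xs ! i" using win[OF i] by simp
    finally show "map (kappa r) [2..<N - 1] ! i = ?xs ! i" .
  qed
  show ?thesis unfolding Let_def r_def[symmetric] N_def[symmetric] using P1 P2 by blast
qed

end
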